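(* Let $K=\{p_1,\dots,p_N\}\subset\mathbb{R}^d$ be finite. Then: (i) $\eta$ is constant on each Voronoi cell, hence has finite range $\mathcal{E}$; (ii) $\{Q_\eta\}_{\eta\in\mathcal{E}}$ is a partition of $\mathbb{R}^d$, and $x\in Q_\eta$ if and only if $\nabla f(x)=\eta-x$; (iii) for every $\eta\in\mathcal{E}$, both $Q_\eta$ and $P_\eta$ are unions of Voronoi cells, and $Q_\eta\subseteq P_\eta$; (iv) for every $\eta\in\mathcal{E}$, $P_\eta$ is a polyhedron; (v) with $\beta:=\min\{|\eta-\bar\eta|^2:\eta,\bar\eta\in\mathcal{E},\eta\ne\bar\eta\}>0$, one has $|\bar\eta-x|^2\ge|\eta-x|^2+\beta$ for all distinct $\eta,\bar\eta\in\mathcal{E}$ and all $x\in Q_\eta\cap P_{\bar\eta}$.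
   Context: $K=\{p_1,\dots,p_N\}\subset\mathbb{R}^d$ consists of $N$ distinct points. $f(x):=-\tfrac12\operatorname{dist}_K(x)^2$, $g(x):=\max_{y\in K}(x\cdot y-\tfrac12|y|^2)$ (convex, with convex subdifferential $\partial g$). $\operatorname{opt}(x):=\{y\in K:|x-y|=\operatorname{dist}_K(x)\}$ and $\eta(x)$ is the orthogonal projection of $x$ onto $\operatorname{conv}(\operatorname{opt}(x))$. $\nabla f(x)$ is the minimal-norm element of $\partial f(x):=\{\xi: f(y)\ge f(x)+\xi\cdot(y-x)-\tfrac12|y-x|^2\ \forall y\}$. For $H\subseteq K$ the Voronoi cell is $V_H:=\{x:\operatorname{opt}(x)=H\}$. For $\eta\in\mathbb{R}^d$: $Q_\eta:=\{x:\eta(x)=\eta\}$ (potential zone) and $P_\eta:=\{x:\eta\in\partial g(x)\}$. A polyhedron is a nonempty closed convex set of the form $\bigcap_{j=1}^\ell\{x:T_j(x)\le0\}$ with $T_j$ affine. *)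

theory Defs
  imports "HOL-Analysis.Analysis"
begin

definition vf :: "'a::euclidean_space set \<Rightarrow> 'a \<Rightarrow> real" where
  "vf K x = - (1/2) * (infdist x K)\<^sup>2"

definition vg :: "'a::euclidean_space set \<Rightarrow> 'a \<Rightarrow> real" where
  "vg K x = Max ((\<lambda>y. x \<bullet> y - (1/2) * (norm y)\<^sup>2) ` K)"

definition subdiff_g :: "'a::euclidean_space set \<Rightarrow> 'a \<Rightarrow> 'a set" where
  "subdiff_g K x = {\<xi>. \<forall>y. vg K y \<ge> vg K x + \<xi> \<bullet> (y - x)}"

definition vopt :: "'a::euclidean_space set \<Rightarrow> 'a \<Rightarrow> 'a set" where
  "vopt K x = {y \<in> K. dist x y = infdist x K}"

definition veta :: "'a::euclidean_space set \<Rightarrow> 'a \<Rightarrow> 'a" where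
  "veta K x = closest_point (convex hull (vopt K x)) x"

definition subdiff_f :: "'a::euclidean_space set \<Rightarrow> 'a \<Rightarrow> 'a set" where
  "subdiff_f K x = {\<xi>. \<forall>y. vf K y \<ge> vf K x + \<xi> \<bullet> (y - x) - (1/2) * (norm (y - x))\<^sup>2}"

definition grad_f :: "'a::euclidean_space set \<Rightarrow> 'a \<Rightarrow> 'a" where
  "grad_f K x = (THE \<xi>. \<xi> \<in> subdiff_f K x \<and> (\<forall>\<zeta>\<in>subdiff_f K x. norm \<xi> \<le> norm \<zeta>))"

definition voronoi :: "'a::euclidean_space set \<Rightarrow> 'a set \<Rightarrow> 'a set" where
  "voronoi K H = {x. vopt K x = H}"

definition Qzone :: "'a::euclidean_space set \<Rightarrow> 'a \<Rightarrow> 'a set" where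
  "Qzone K e = {x. veta K x = e}"

definition Pzone :: "'a::euclidean_space set \<Rightarrow> 'a \<Rightarrow> 'a set" where
  "Pzone K e = {x. e \<in> subdiff_g K x}"

text \<open>Polyhedron in the paper's sense: nonempty, and a finite intersection of
  half-spaces (library notion, closed convex automatically).\<close>
definition polyhedron_ne :: "'a::euclidean_space set \<Rightarrow> bool" where
  "polyhedron_ne S \<longleftrightarrow> polyhedron S \<and> S \<noteq> {}"

end

theory Submission
  imports Defs
begin

definition phi :: "'a::euclidean_space \<Rightarrow> 'a \<Rightarrow> real" where
  "phi x y = x \<bullet> y - (1/2) * (norm y)\<^sup>2"

lemma dist_sq: "(dist x y)\<^sup>2 = x \<bullet> x - 2 * (x \<bullet> y) + y \<bullet> (y::'a::euclidean_space)"
  by (simp add: dist_norm power2_norm_eq_inner inner_diff_left inner_diff_right inner_commute)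

lemma dist_le_phi: "dist x y \<le> dist x z \<longleftrightarrow> phi x z \<le> phi x (y::'a::euclidean_space)"
proof -
  have "dist x y \<le> dist x z \<longleftrightarrow> (dist x y)\<^sup>2 \<le> (dist x z)\<^sup>2"
    by (simp add: power_mono_iff)
  also have "\<dots> \<longleftrightarrow> phi x z \<le> phi x y"
    unfolding dist_sq phi_def by (simp add: power2_norm_eq_inner) linarith
  finally show ?thesis .
qed

lemma vopt_char:
  assumes "finite K" "K \<noteq> {}"
  shows "vopt K x = {y\<in>K. \<forall>z\<in>K. dist x y \<le> dist x z}"
proof -
  obtain y0 where y0: "y0 \<in> K" "infdist x K = dist x y0"
    using infdist_attains_inf[of K x] assms finite_imp_closed by blast
  show ?thesis unfolding vopt_def
    using y0 infdist_le[of _ K x] by (auto intro: antisym)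
qed

lemma vopt_ne: assumes "finite K" "K \<noteq> {}" shows "vopt K x \<noteq> {}" "vopt K x \<subseteq> K"
proof -
  obtain y0 where y0: "y0 \<in> K" "infdist x K = dist x y0"
    using infdist_attains_inf[of K x] assms finite_imp_closed by blast
  then show "vopt K x \<noteq> {}" unfolding vopt_def by auto
  show "vopt K x \<subseteq> K" unfolding vopt_def by auto
qed

lemma vg_ge: "finite K \<Longrightarrow> z \<in> K \<Longrightarrow> phi x z \<le> vg K x"
  unfolding vg_def phi_def by (rule Max_ge) auto

lemma vg_attained: "finite K \<Longrightarrow> K \<noteq> {} \<Longrightarrow> \<exists>k\<in>K. vg K x = phi x k"
proof -
  assume "finite K" "K \<noteq> {}"
  then have "vg K x \<in> (\<lambda>y. phi x y) ` K" unfolding vg_def phi_def by (intro Max_in) auto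
  then show ?thesis by auto
qed

lemma vopt_phi:
  assumes "finite K" "K \<noteq> {}"
  shows "vopt K x = {y\<in>K. phi x y = vg K x}"
proof -
  have "\<forall>z\<in>K. phi x z \<le> phi x y" if "y\<in>K" "phi x y = vg K x" for y
    using that vg_ge[OF assms(1)] by auto
  moreover have "phi x y = vg K x" if "y\<in>K" "\<forall>z\<in>K. phi x z \<le> phi x y" for y
    using that vg_ge[OF assms(1), of y x] vg_attained[OF assms, of x] by force
  ultimately show ?thesis unfolding vopt_char[OF assms] dist_le_phi by blast
qed

lemma vf_vg:
  assumes "finite K" "K \<noteq> {}"
  shows "vf K x = vg K x - (1/2) * (norm x)\<^sup>2"
proof -
  obtain y0 where y0: "y0 \<in> K" "infdist x K = dist x y0"
    using infdist_attains_inf[of K x] assms finite_imp_closed by blast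
  then have "y0 \<in> vopt K x" unfolding vopt_def by auto
  then have "vg K x = phi x y0" using vopt_phi[OF assms] by auto
  then show ?thesis unfolding vf_def y0(2) dist_sq phi_def
    by (simp add: power2_norm_eq_inner algebra_simps)
qed

lemma phi_shift: "phi y a = phi x a + a \<bullet> (y - x)"
  unfolding phi_def by (simp add: inner_diff_right inner_commute)

lemma convex_subdiff_g: "convex (subdiff_g K x)"
  unfolding convex_def
proof (intro allI impI ballI)
  fix a b :: 'a and u v :: real
  assume a: "a \<in> subdiff_g K x" and b: "b \<in> subdiff_g K x" and uv: "0 \<le> u" "0 \<le> v" "u + v = 1"
  show "u *\<^sub>R a + v *\<^sub>R b \<in> subdiff_g K x" unfolding subdiff_g_def
  proof (intro CollectI allI)
    fix y
    have "u * (vg K x + a \<bullet> (y - x)) \<le> u * vg K y"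
      using a uv(1) unfolding subdiff_g_def by (intro mult_left_mono) auto
    moreover have "v * (vg K x + b \<bullet> (y - x)) \<le> v * vg K y"
      using b uv(2) unfolding subdiff_g_def by (intro mult_left_mono) auto
    ultimately have "u * (vg K x + a \<bullet> (y - x)) + v * (vg K x + b \<bullet> (y - x)) \<le> (u + v) * vg K y"
      by (simp add: distrib_right)
    moreover have "vg K x = u * vg K x + v * vg K x" using uv(3) by (metis distrib_right mult_1)
    ultimately show "vg K x + (u *\<^sub>R a + v *\<^sub>R b) \<bullet> (y - x) \<le> vg K y"
      using uv(3) by (simp add: inner_add_left inner_diff_right algebra_simps)
  qed
qed

lemma subdiff_g_eq:
  assumes "finite K" "K \<noteq> {}"
  shows "subdiff_g K x = convex hull (vopt K x)"
proof
  show "convex hull (vopt K x) \<subseteq> subdiff_g K x"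
  proof (rule hull_minimal)
    show "convex (subdiff_g K x)" by (rule convex_subdiff_g)
    show "vopt K x \<subseteq> subdiff_g K x"
    proof
      fix a assume a: "a \<in> vopt K x"
      then have "a \<in> K" "phi x a = vg K x" using vopt_phi[OF assms] by auto
      then show "a \<in> subdiff_g K x" unfolding subdiff_g_def
      proof (intro CollectI allI)
        fix y
        have "phi y a \<le> vg K y" using vg_ge[OF assms(1) \<open>a\<in>K\<close>] .
        then show "vg K x + a \<bullet> (y - x) \<le> vg K y"
          using phi_shift[of y a x] \<open>phi x a = vg K x\<close> by simp
      qed
    qed
  qed
next
  show "subdiff_g K x \<subseteq> convex hull (vopt K x)"
  proof (rule ccontr)
    assume "\<not> ?thesis"
    then obtain \<xi> where xi: "\<xi> \<in> subdiff_g K x" "\<xi> \<notin> convex hull (vopt K x)" by blast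
    have fin: "finite (vopt K x)" using vopt_ne[OF assms] assms(1) finite_subset by blast
    have "closed (convex hull (vopt K x))"
      using fin by (simp add: compact_convex_hull finite_imp_compact compact_imp_closed)
    then obtain a b where ab: "a \<bullet> \<xi> < b" "\<forall>c\<in>convex hull (vopt K x). a \<bullet> c > b"
      using separating_hyperplane_closed_point[OF convex_convex_hull _ xi(2)] by blast
    define v where "v = - a"
    have v1: "v \<bullet> \<xi> > - b" using ab(1) unfolding v_def by simp
    have v2: "v \<bullet> c < - b" if "c \<in> vopt K x" for c
      using ab(2) hull_inc[OF that, of convex] unfolding v_def by force
    have ev: "\<forall>\<^sub>F t in at_right (0::real). \<forall>k\<in>K. phi x k + t * (v \<bullet> k) < vg K x + t * (v \<bullet> \<xi>)"
    proof (rule eventually_ball_finite[OF assms(1)], rule ballI)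
      fix k assume k: "k \<in> K"
      show "\<forall>\<^sub>F t in at_right 0. phi x k + t * (v \<bullet> k) < vg K x + t * (v \<bullet> \<xi>)"
      proof (cases "k \<in> vopt K x")
        case True
        then have "phi x k = vg K x" using vopt_phi[OF assms] by auto
        moreover have "v \<bullet> k < v \<bullet> \<xi>" using v1 v2[OF True] by simp
        ultimately show ?thesis using eventually_at_right_less[of "0::real"]
          by (elim eventually_mono) (auto simp: mult_strict_left_mono)
      next
        case False
        then have lt: "phi x k < vg K x" using vopt_phi[OF assms] vg_ge[OF assms(1) k, of x] k by auto
        have "((\<lambda>t. phi x k + t * (v \<bullet> k) - (vg K x + t * (v \<bullet> \<xi>))) \<longlongrightarrow> phi x k + 0 * (v \<bullet> k) - (vg K x + 0 * (v \<bullet> \<xi>))) (at_right 0)"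
          by (intro tendsto_intros)
        then have "\<forall>\<^sub>F t in at_right 0. phi x k + t * (v \<bullet> k) - (vg K x + t * (v \<bullet> \<xi>)) < 0"
          using lt by (intro order_tendstoD) auto
        then show ?thesis by eventually_elim simp
      qed
    qed
    moreover have "\<forall>\<^sub>F t in at_right (0::real). t > 0" by (simp add: eventually_at_right_less)
    ultimately have "\<forall>\<^sub>F t in at_right (0::real). t > 0 \<and> (\<forall>k\<in>K. phi x k + t * (v \<bullet> k) < vg K x + t * (v \<bullet> \<xi>))"
      by eventually_elim auto
    then obtain t where t: "t > 0" "\<forall>k\<in>K. phi x k + t * (v \<bullet> k) < vg K x + t * (v \<bullet> \<xi>)"
      using eventually_happens'[OF trivial_limit_at_right_real] by blast
    obtain k where k: "k \<in> K" "vg K (x + t *\<^sub>R v) = phi (x + t *\<^sub>R v) k"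
      using vg_attained[OF assms] by blast
    have "phi (x + t *\<^sub>R v) k = phi x k + t * (v \<bullet> k)"
      using phi_shift[of "x + t *\<^sub>R v" k x] by (simp add: inner_commute)
    moreover have "vg K (x + t *\<^sub>R v) \<ge> vg K x + t * (v \<bullet> \<xi>)"
      using xi(1) unfolding subdiff_g_def by (auto simp: inner_commute dest: spec[of _ "x + t *\<^sub>R v"])
    ultimately show False using t(2) k by (metis not_le)
  qed
qed


lemma subdiff_f_eq:
  assumes "finite K" "K \<noteq> {}"
  shows "subdiff_f K x = {\<xi>. \<xi> + x \<in> convex hull (vopt K x)}"
proof -
  have "vf K x + \<xi> \<bullet> (y - x) - (1/2) * (norm (y - x))\<^sup>2 \<le> vf K y \<longleftrightarrow>
        vg K x + (\<xi> + x) \<bullet> (y - x) \<le> vg K y" for \<xi> y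
  proof -
    have e: "(y - x) \<bullet> (y - x) = y \<bullet> y - 2 * (x \<bullet> y) + x \<bullet> x"
      by (simp add: inner_diff_left inner_diff_right inner_commute)
    have e2: "(\<xi> + x) \<bullet> (y - x) = \<xi> \<bullet> (y - x) + x \<bullet> y - x \<bullet> x"
      by (simp add: inner_add_left inner_diff_right)
    show ?thesis unfolding vf_vg[OF assms] power2_norm_eq_inner e e2 by (simp add: algebra_simps)
  qed
  then show ?thesis unfolding subdiff_f_def subdiff_g_eq[OF assms, symmetric] subdiff_g_def by simp
qed

lemma hull_closed:
  assumes "finite K" "K \<noteq> {}"
  shows "closed (convex hull (vopt K x))" "convex hull (vopt K x) \<noteq> {}"
proof -
  have fin: "finite (vopt K x)" using vopt_ne[OF assms] assms(1) finite_subset by blast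
  then show "closed (convex hull (vopt K x))"
    by (simp add: compact_convex_hull finite_imp_compact compact_imp_closed)
  show "convex hull (vopt K x) \<noteq> {}" using vopt_ne[OF assms] by simp
qed

lemma grad_f_eq:
  assumes "finite K" "K \<noteq> {}"
  shows "grad_f K x = veta K x - x"
proof -
  define C where "C = convex hull (vopt K x)"
  have cl: "closed C" "C \<noteq> {}" "convex C" using hull_closed[OF assms] C_def by auto
  have p: "closest_point C x \<in> C" using closest_point_in_set[OF cl(1,2)] .
  show ?thesis unfolding grad_f_def subdiff_f_eq[OF assms] veta_def C_def[symmetric]
  proof (rule the_equality)
    show "closest_point C x - x \<in> {\<xi>. \<xi> + x \<in> C} \<and>
      (\<forall>\<zeta>\<in>{\<xi>. \<xi> + x \<in> C}. norm (closest_point C x - x) \<le> norm \<zeta>)"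
    proof (intro conjI ballI)
      show "closest_point C x - x \<in> {\<xi>. \<xi> + x \<in> C}" using p by simp
      fix \<zeta> assume "\<zeta> \<in> {\<xi>. \<xi> + x \<in> C}"
      then have "dist x (closest_point C x) \<le> dist x (\<zeta> + x)" using closest_point_le[OF cl(1)] by auto
      then show "norm (closest_point C x - x) \<le> norm \<zeta>" by (simp add: dist_norm norm_minus_commute)
    qed
  next
    fix \<xi> assume h: "\<xi> \<in> {\<xi>. \<xi> + x \<in> C} \<and> (\<forall>\<zeta>\<in>{\<xi>. \<xi> + x \<in> C}. norm \<xi> \<le> norm \<zeta>)"
    have "\<forall>z\<in>C. dist x (\<xi> + x) \<le> dist x z"
    proof
      fix z assume "z \<in> C"
      then have "norm \<xi> \<le> norm (z - x)" using h by auto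
      then show "dist x (\<xi> + x) \<le> dist x z" by (simp add: dist_norm norm_minus_commute)
    qed
    then have "\<xi> + x = closest_point C x" using closest_point_unique[OF cl(3,1)] h by auto
    then show "\<xi> = closest_point C x - x" by (simp add: eq_diff_eq)
  qed
qed

lemma veta_cell:
  assumes "finite K" "K \<noteq> {}" "vopt K x = vopt K x'"
  shows "veta K x = veta K x'"
proof -
  define H where "H = vopt K x"
  define C where "C = convex hull H"
  have cl: "closed C" "C \<noteq> {}" "convex C" using hull_closed[OF assms(1,2)] C_def H_def by auto
  obtain h0 where h0: "h0 \<in> H" using vopt_ne[OF assms(1,2)] H_def by blast
  have hd: "(x - x') \<bullet> h = (x - x') \<bullet> h0" if "h \<in> H" for h
  proof -
    have "dist x h = dist x h0" using that h0 unfolding H_def vopt_def by auto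
    moreover have "dist x' h = dist x' h0" using that h0 unfolding H_def assms(3) unfolding vopt_def by auto
    ultimately have "(dist x h)\<^sup>2 = (dist x h0)\<^sup>2" "(dist x' h)\<^sup>2 = (dist x' h0)\<^sup>2" by auto
    then show ?thesis unfolding dist_sq by (simp add: inner_diff_left) 
  qed
  have "C \<subseteq> {z. (x - x') \<bullet> z = (x - x') \<bullet> h0}"
    unfolding C_def by (rule hull_minimal) (auto simp: hd convex_hyperplane)
  then have dd: "(dist x z)\<^sup>2 = (dist x' z)\<^sup>2 + (x \<bullet> x - x' \<bullet> x' - 2 * ((x - x') \<bullet> h0))" if "z \<in> C" for z
    using that unfolding dist_sq by (auto simp: inner_diff_left)
  have p: "closest_point C x' \<in> C" using closest_point_in_set[OF cl(1,2)] .
  have "\<forall>z\<in>C. dist x (closest_point C x') \<le> dist x z"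
  proof
    fix z assume z: "z \<in> C"
    have "dist x' (closest_point C x') \<le> dist x' z" using closest_point_le[OF cl(1) z] .
    then have "(dist x' (closest_point C x'))\<^sup>2 \<le> (dist x' z)\<^sup>2" by (simp add: power_mono)
    then have "(dist x (closest_point C x'))\<^sup>2 \<le> (dist x z)\<^sup>2" using dd[OF z] dd[OF p] by linarith
    then show "dist x (closest_point C x') \<le> dist x z" by (simp add: power_mono_iff)
  qed
  then have "closest_point C x' = closest_point C x" using closest_point_unique[OF cl(3,1) p] by blast
  then show ?thesis unfolding veta_def using assms(3) H_def C_def by simp
qed

lemma Pzone_polyhedron:
  assumes "finite K" "K \<noteq> {}" "x0 \<in> Pzone K e"
  shows "polyhedron (Pzone K e)"
proof -
  define m where "m = vg K x0 - e \<bullet> x0"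
  have "Pzone K e = {x. vg K x - e \<bullet> x \<le> m}"
  proof (intro set_eqI iffI)
    fix x assume "x \<in> Pzone K e"
    then have "vg K x0 \<ge> vg K x + e \<bullet> (x0 - x)" unfolding Pzone_def subdiff_g_def by auto
    then show "x \<in> {x. vg K x - e \<bullet> x \<le> m}" unfolding m_def by (simp add: inner_diff_right)
  next
    fix x assume "x \<in> {x. vg K x - e \<bullet> x \<le> m}"
    moreover have "vg K y \<ge> vg K x0 + e \<bullet> (y - x0)" for y
      using assms(3) unfolding Pzone_def subdiff_g_def by auto
    ultimately show "x \<in> Pzone K e" unfolding Pzone_def subdiff_g_def m_def
      by (auto simp: inner_diff_right) (smt (verit))
  qed
  also have "\<dots> = (\<Inter>k\<in>K. {x. (k - e) \<bullet> x \<le> m + (1/2) * (norm k)\<^sup>2})"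
  proof -
    have "vg K x - e \<bullet> x \<le> m \<longleftrightarrow> (\<forall>k\<in>K. (k - e) \<bullet> x \<le> m + (1/2) * (norm k)\<^sup>2)" for x
    proof -
      have "vg K x \<le> m + e \<bullet> x \<longleftrightarrow> (\<forall>k\<in>K. x \<bullet> k - (1/2) * (norm k)\<^sup>2 \<le> m + e \<bullet> x)"
        unfolding vg_def using assms(1,2) by (simp add: Max_le_iff)
      moreover have "x \<bullet> k - (1/2) * (norm k)\<^sup>2 \<le> m + e \<bullet> x \<longleftrightarrow> (k - e) \<bullet> x \<le> m + (1/2) * (norm k)\<^sup>2" for k
      proof -
        have "(k - e) \<bullet> x = x \<bullet> k - e \<bullet> x" by (metis inner_commute inner_diff_left)
        then show ?thesis by linarith
      qed
      ultimately show ?thesis by (simp add: algebra_simps)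
    qed
    then show ?thesis by auto
  qed
  finally show ?thesis using assms(1) by (auto intro!: polyhedron_Inter polyhedron_halfspace_le)
qed


lemma norm_add_sq: "(norm (a + b))\<^sup>2 = (norm a)\<^sup>2 + (norm b)\<^sup>2 + 2 * (a \<bullet> (b::'a::euclidean_space))"
  unfolding power2_norm_eq_inner by (simp add: inner_add_left inner_add_right inner_commute[of b a])

lemma norm_split: "(norm (e' - x))\<^sup>2 = (norm (e' - e))\<^sup>2 + (norm (e - x))\<^sup>2 - 2 * ((x - e) \<bullet> (e' - (e::'a::euclidean_space)))"
proof -
  have "(norm (e' - x))\<^sup>2 = (norm ((e' - e) + (e - x)))\<^sup>2" by simp
  also have "\<dots> = (norm (e' - e))\<^sup>2 + (norm (e - x))\<^sup>2 + 2 * ((e' - e) \<bullet> (e - x))"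
    by (rule norm_add_sq)
  also have "(e' - e) \<bullet> (e - x) = - ((x - e) \<bullet> (e' - e))"
    by (metis inner_commute inner_minus_left minus_diff_eq)
  finally show ?thesis by simp
qed

theorem proposition3p5:
  fixes K :: "'a::euclidean_space set"
  assumes "finite K" and "K \<noteq> {}"
  shows
   "(\<forall>H x y. x \<in> voronoi K H \<and> y \<in> voronoi K H \<longrightarrow> veta K x = veta K y)
    \<and> finite (range (veta K))
    \<and> (\<Union>e\<in>range (veta K). Qzone K e) = UNIV
    \<and> (\<forall>e\<in>range (veta K). Qzone K e \<noteq> {})
    \<and> (\<forall>e\<in>range (veta K). \<forall>e'\<in>range (veta K). e \<noteq> e' \<longrightarrow> Qzone K e \<inter> Qzone K e' = {})
    \<and> (\<forall>e\<in>range (veta K). \<forall>x. x \<in> Qzone K e \<longleftrightarrow> grad_f K x = e - x)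
    \<and> (\<forall>e\<in>range (veta K).
          (\<exists>\<H>. \<H> \<subseteq> Pow K \<and> Qzone K e = (\<Union>H\<in>\<H>. voronoi K H))
        \<and> (\<exists>\<H>. \<H> \<subseteq> Pow K \<and> Pzone K e = (\<Union>H\<in>\<H>. voronoi K H))
        \<and> Qzone K e \<subseteq> Pzone K e)
    \<and> (\<forall>e\<in>range (veta K). polyhedron_ne (Pzone K e))
    \<and> (let E = range (veta K);
           \<beta> = Min {(norm (e - e'))\<^sup>2 | e e'. e \<in> E \<and> e' \<in> E \<and> e \<noteq> e'}
       in (card E \<ge> 2 \<longrightarrow> \<beta> > 0)
          \<and> (\<forall>e\<in>E. \<forall>e'\<in>E. e \<noteq> e' \<longrightarrow>
               (\<forall>x \<in> Qzone K e \<inter> Pzone K e'. (norm (e' - x))\<^sup>2 \<ge> (norm (e - x))\<^sup>2 + \<beta>)))"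
proof -
  note A = assms
  have P1: "\<forall>H x y. x \<in> voronoi K H \<and> y \<in> voronoi K H \<longrightarrow> veta K x = veta K y"
    unfolding voronoi_def using veta_cell[OF A] by auto
  define g where "g H = veta K (SOME x. vopt K x = H)" for H
  have "range (veta K) \<subseteq> g ` Pow K"
  proof
    fix e assume "e \<in> range (veta K)"
    then obtain x where x: "e = veta K x" by auto
    have "vopt K (SOME x'. vopt K x' = vopt K x) = vopt K x" by (rule someI) simp
    then have "e = g (vopt K x)" unfolding g_def x using veta_cell[OF A] by metis
    then show "e \<in> g ` Pow K" using vopt_ne(2)[OF A, of x] by auto
  qed
  then have P2: "finite (range (veta K))" using A(1) finite_subset by blast
  have P3: "(\<Union>e\<in>range (veta K). Qzone K e) = UNIV" unfolding Qzone_def by auto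
  have P4: "\<forall>e\<in>range (veta K). Qzone K e \<noteq> {}" unfolding Qzone_def by auto
  have P5: "\<forall>e\<in>range (veta K). \<forall>e'\<in>range (veta K). e \<noteq> e' \<longrightarrow> Qzone K e \<inter> Qzone K e' = {}"
    unfolding Qzone_def by auto
  have P6: "\<forall>e\<in>range (veta K). \<forall>x. x \<in> Qzone K e \<longleftrightarrow> grad_f K x = e - x"
    unfolding Qzone_def grad_f_eq[OF A] by auto
  have Pz: "Pzone K e = {x. e \<in> convex hull (vopt K x)}" for e
    unfolding Pzone_def subdiff_g_eq[OF A] ..
  have inC: "veta K x \<in> convex hull (vopt K x)" for x
    unfolding veta_def using closest_point_in_set[OF hull_closed[OF A]] .
  have QP: "Qzone K e \<subseteq> Pzone K e" for e
    unfolding Pz Qzone_def using inC by auto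
  have P7: "\<forall>e\<in>range (veta K).
          (\<exists>\<H>. \<H> \<subseteq> Pow K \<and> Qzone K e = (\<Union>H\<in>\<H>. voronoi K H))
        \<and> (\<exists>\<H>. \<H> \<subseteq> Pow K \<and> Pzone K e = (\<Union>H\<in>\<H>. voronoi K H))
        \<and> Qzone K e \<subseteq> Pzone K e"
  proof (intro ballI conjI)
    fix e
    show "Qzone K e \<subseteq> Pzone K e" by (rule QP)
    show "\<exists>\<H>. \<H> \<subseteq> Pow K \<and> Qzone K e = (\<Union>H\<in>\<H>. voronoi K H)"
    proof (intro exI conjI)
      show "{H. H \<subseteq> K \<and> (\<exists>x. vopt K x = H \<and> veta K x = e)} \<subseteq> Pow K" by auto
      show "Qzone K e = (\<Union>H\<in>{H. H \<subseteq> K \<and> (\<exists>x. vopt K x = H \<and> veta K x = e)}. voronoi K H)"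
        unfolding Qzone_def voronoi_def using vopt_ne(2)[OF A] veta_cell[OF A] by blast
    qed
    show "\<exists>\<H>. \<H> \<subseteq> Pow K \<and> Pzone K e = (\<Union>H\<in>\<H>. voronoi K H)"
    proof (intro exI conjI)
      show "{H. H \<subseteq> K \<and> e \<in> convex hull H} \<subseteq> Pow K" by auto
      show "Pzone K e = (\<Union>H\<in>{H. H \<subseteq> K \<and> e \<in> convex hull H}. voronoi K H)"
        unfolding Pz voronoi_def using vopt_ne(2)[OF A] by blast
    qed
  qed
  have P8: "\<forall>e\<in>range (veta K). polyhedron_ne (Pzone K e)"
  proof
    fix e assume "e \<in> range (veta K)"
    then obtain x0 where "veta K x0 = e" by auto
    then have x0: "x0 \<in> Pzone K e" using QP unfolding Qzone_def by auto
    then show "polyhedron_ne (Pzone K e)" unfolding polyhedron_ne_def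
      using Pzone_polyhedron[OF A x0] by auto
  qed
  define E where "E = range (veta K)"
  define B where "B = {(norm (e - e'))\<^sup>2 | e e'. e \<in> E \<and> e' \<in> E \<and> e \<noteq> e'}"
  have finB: "finite B"
  proof -
    have "B \<subseteq> (\<lambda>(e, e'). (norm (e - e'))\<^sup>2) ` (E \<times> E)" unfolding B_def by auto
    then show ?thesis using P2 E_def finite_subset by blast
  qed
  have P9a: "card E \<ge> 2 \<longrightarrow> Min B > 0"
  proof
    assume c: "card E \<ge> 2"
    have "B \<noteq> {}"
    proof
      assume "B = {}"
      then have all: "\<forall>e\<in>E. \<forall>e'\<in>E. e = e'" unfolding B_def by blast
      obtain e0 where "e0 \<in> E" unfolding E_def by auto
      then have "E \<subseteq> {e0}" using all by auto
      then have "card E \<le> 1" using card_mono[of "{e0}" E] by auto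
      then show False using c by simp
    qed
    moreover have "\<forall>b\<in>B. b > 0" unfolding B_def by auto
    ultimately show "Min B > 0" using finB by (simp add: Min_gr_iff)
  qed
  have P9b: "\<forall>e\<in>E. \<forall>e'\<in>E. e \<noteq> e' \<longrightarrow>
               (\<forall>x \<in> Qzone K e \<inter> Pzone K e'. (norm (e' - x))\<^sup>2 \<ge> (norm (e - x))\<^sup>2 + Min B)"
  proof (intro ballI impI)
    fix e e' x assume e: "e \<in> E" "e' \<in> E" "e \<noteq> e'" and x: "x \<in> Qzone K e \<inter> Pzone K e'"
    have "Min B \<le> (norm (e - e'))\<^sup>2" using finB e unfolding B_def by (intro Min_le) auto
    moreover have "(norm (e - e')) = norm (e' - e)" by (rule norm_minus_commute)
    moreover have "(x - e) \<bullet> (e' - e) \<le> 0"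
    proof -
      have "e' \<in> convex hull (vopt K x)" "veta K x = e" using x unfolding Pz Qzone_def by auto
      then show ?thesis unfolding veta_def
        using closest_point_dot[OF convex_convex_hull hull_closed(1)[OF A]] by blast
    qed
    ultimately show "(norm (e' - x))\<^sup>2 \<ge> (norm (e - x))\<^sup>2 + Min B"
      unfolding norm_split[of e' x e] by simp
  qed
  have P9: "let E = range (veta K);
           \<beta> = Min {(norm (e - e'))\<^sup>2 | e e'. e \<in> E \<and> e' \<in> E \<and> e \<noteq> e'}
       in (card E \<ge> 2 \<longrightarrow> \<beta> > 0)
          \<and> (\<forall>e\<in>E. \<forall>e'\<in>E. e \<noteq> e' \<longrightarrow>
               (\<forall>x \<in> Qzone K e \<inter> Pzone K e'. (norm (e' - x))\<^sup>2 \<ge> (norm (e - x))\<^sup>2 + \<beta>))"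
    unfolding Let_def E_def[symmetric] B_def[symmetric] using P9a P9b by (intro conjI)
  show ?thesis by (intro P1 P2 P3 P4 P5 P6 P7 P8 P9 conjI)
qed

end
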